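(* Let $\mathcal T$ be a good triangulation of $\mathcal C_G$, let $S\in\mathcal T$ be a maximal simplex and let $w\in V$. Then there are unique real numbers $\lambda^w_u$ ($u\in V(S)$) and $\lambda^w_f$ ($f\in D(S)$) such that $$e_w=\sum_{u\in V(S)}\lambda^w_u e_u+\sum_{f\in D(S)}\lambda^w_f(e_{u_f}-e_{v_f}),$$ where $(u_f,v_f)$ is the fixed ordering of the endpoints of $f$.
   Context: For a finite undirected multigraph $G=(V,E)$ (loops, parallel edges and isolated nodes allowed) with $n=|V|$, $m=|E|$, work in $\mathbb{R}^V\times\mathbb{R}^E\cong\mathbb{R}^{n+m}$ with standard basis vectors $e_u$ ($u\in V$), $e_f$ ($f\in E$). Fix for each edge $f$ an ordering $(u,v)$ of its endpoints ($u=v$ for a loop) and set $\widetilde e_f=e_u+e_v-e_f$, $\overleftarrow e_f=e_u-e_v+e_f$, $\overrightarrow e_f=-e_u+e_v+e_f$ (so for a loop $\overleftarrow e_f=\overrightarrow e_f=e_f$). The cosmological polytope $\mathcal C_G$ is the convex hull of $\{e_f,\widetilde e_f,\overleftarrow e_f,\overrightarrow e_f: f\in E\}\cup\{e_u: u\in V\}$; these are exactly its lattice points, and it is an $(n+m-1)$-dimensional polytope in the hyperplane $\sum_i x_i=1$. A good triangulation of $\mathcal C_G$ is a regular triangulation (induced by a height function on the lattice points of $\mathcal C_G$) whose vertex set is the set of all lattice points of $\mathcal C_G$ and which contains the standard simplex $\mathrm{conv}\{e_u,e_f: u\in V, f\in E\}$ as a maximal cell; simplices are identified with their vertex sets. For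 a simplex $S\in\mathcal T$: the selected nodes are $V(S)=\{u\in V: e_u\in S\}$; the squiggly edges $\widetilde E(S)=\{f:\widetilde e_f\in S\}$; the selected edges $\widehat E(S)=\{f: e_f\in S\}$; for non-loop edges $f$, $f\in\overleftarrow E(S)$ iff $\overleftarrow e_f\in S$ and $f\in\overrightarrow E(S)$ iff $\overrightarrow e_f\in S$ (loops are never in $\overleftarrow E(S)\cup\overrightarrow E(S)$); the double edges are $D(S)=(\overleftarrow E(S)\cup\overrightarrow E(S))\cap\widehat E(S)$. *)

theory Defs
  imports Complex_Main
begin

text \<open>Multigraph: vertex set V, edge set E, each edge f with a fixed ordering
 (src f, tgt f) of its endpoints (src f = tgt f for a loop).
 The ambient space R^V x R^E is modelled by functions ('v + 'e) \<Rightarrow> real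
 (only coordinates in V <+> E matter; all points considered vanish elsewhere).\<close>

definition unitv :: "'a \<Rightarrow> 'a \<Rightarrow> real" where
  "unitv i = (\<lambda>j. if j = i then 1 else 0)"

definition eN :: "'v \<Rightarrow> ('v + 'e) \<Rightarrow> real" where
  "eN u = unitv (Inl u)"

definition eE :: "'e \<Rightarrow> ('v + 'e) \<Rightarrow> real" where
  "eE f = unitv (Inr f)"

definition eSq :: "('e \<Rightarrow> 'v) \<Rightarrow> ('e \<Rightarrow> 'v) \<Rightarrow> 'e \<Rightarrow> ('v + 'e) \<Rightarrow> real" where
  "eSq src tgt f = (\<lambda>j. eN (src f) j + eN (tgt f) j - eE f j)"

definition eLeft :: "('e \<Rightarrow> 'v) \<Rightarrow> ('e \<Rightarrow> 'v) \<Rightarrow> 'e \<Rightarrow> ('v + 'e) \<Rightarrow> real" where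
  "eLeft src tgt f = (\<lambda>j. eN (src f) j - eN (tgt f) j + eE f j)"

definition eRight :: "('e \<Rightarrow> 'v) \<Rightarrow> ('e \<Rightarrow> 'v) \<Rightarrow> 'e \<Rightarrow> ('v + 'e) \<Rightarrow> real" where
  "eRight src tgt f = (\<lambda>j. - eN (src f) j + eN (tgt f) j + eE f j)"

definition cosmo_points :: "'v set \<Rightarrow> 'e set \<Rightarrow> ('e \<Rightarrow> 'v) \<Rightarrow> ('e \<Rightarrow> 'v)
    \<Rightarrow> (('v + 'e) \<Rightarrow> real) set" where
  "cosmo_points V E src tgt =
     eN ` V \<union> eE ` E \<union> eSq src tgt ` E \<union> eLeft src tgt ` E \<union> eRight src tgt ` E"

definition conv_hull :: "('a \<Rightarrow> real) set \<Rightarrow> ('a \<Rightarrow> real) set" where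
  "conv_hull C = {x. \<exists>c. (\<forall>p\<in>C. 0 \<le> c p) \<and> sum c C = 1 \<and>
                        x = (\<lambda>i. \<Sum>p\<in>C. c p * p i)}"

definition aff_indep :: "('a \<Rightarrow> real) set \<Rightarrow> bool" where
  "aff_indep C \<longleftrightarrow> finite C \<and> (\<forall>c. sum c C = 0 \<and> (\<forall>i. (\<Sum>p\<in>C. c p * p i) = 0)
                                    \<longrightarrow> (\<forall>p\<in>C. c p = 0))"

text \<open>Maximal cells of the regular subdivision induced by the height function h:
 sets C of n+m affinely independent lattice points such that some affine function
 agrees with h on C and lies strictly below h at all other lattice points
 (i.e. lower facets of the lifted point configuration that are simplices).\<close>
definition lower_cell :: "'v set \<Rightarrow> 'e set \<Rightarrow> ('e \<Rightarrow> 'v) \<Rightarrow> ('e \<Rightarrow> 'v)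
    \<Rightarrow> ((('v + 'e) \<Rightarrow> real) \<Rightarrow> real) \<Rightarrow> (('v + 'e) \<Rightarrow> real) set \<Rightarrow> bool" where
  "lower_cell V E src tgt h C \<longleftrightarrow>
     C \<subseteq> cosmo_points V E src tgt \<and> card C = card V + card E \<and> aff_indep C \<and>
     (\<exists>a b. (\<forall>p\<in>C. (\<Sum>i\<in>V <+> E. a i * p i) + b = h p) \<and>
            (\<forall>p\<in>cosmo_points V E src tgt - C. (\<Sum>i\<in>V <+> E. a i * p i) + b < h p))"

text \<open>T (a set of simplices, each identified with its vertex set, closed under faces)
 is the regular triangulation of the cosmological polytope induced by h.\<close>
definition regular_triangulation :: "'v set \<Rightarrow> 'e set \<Rightarrow> ('e \<Rightarrow> 'v) \<Rightarrow> ('e \<Rightarrow> 'v)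
    \<Rightarrow> ((('v + 'e) \<Rightarrow> real) \<Rightarrow> real) \<Rightarrow> (('v + 'e) \<Rightarrow> real) set set \<Rightarrow> bool" where
  "regular_triangulation V E src tgt h T \<longleftrightarrow>
     T = {S. \<exists>C. lower_cell V E src tgt h C \<and> S \<subseteq> C} \<and>
     conv_hull (cosmo_points V E src tgt) \<subseteq>
        \<Union>{conv_hull C | C. lower_cell V E src tgt h C}"

definition max_simplex :: "'a set set \<Rightarrow> 'a set \<Rightarrow> bool" where
  "max_simplex T S \<longleftrightarrow> S \<in> T \<and> \<not> (\<exists>S'\<in>T. S \<subset> S')"

definition std_simplex :: "'v set \<Rightarrow> 'e set \<Rightarrow> (('v + 'e) \<Rightarrow> real) set" where
  "std_simplex V E = eN ` V \<union> eE ` E"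

definition good_triangulation :: "'v set \<Rightarrow> 'e set \<Rightarrow> ('e \<Rightarrow> 'v) \<Rightarrow> ('e \<Rightarrow> 'v)
    \<Rightarrow> (('v + 'e) \<Rightarrow> real) set set \<Rightarrow> bool" where
  "good_triangulation V E src tgt T \<longleftrightarrow>
     (\<exists>h. regular_triangulation V E src tgt h T) \<and>
     \<Union>T = cosmo_points V E src tgt \<and>
     max_simplex T (std_simplex V E)"

definition sel_nodes :: "'v set \<Rightarrow> (('v + 'e) \<Rightarrow> real) set \<Rightarrow> 'v set" where
  "sel_nodes V S = {u\<in>V. eN u \<in> S}"

definition double_edges :: "'e set \<Rightarrow> ('e \<Rightarrow> 'v) \<Rightarrow> ('e \<Rightarrow> 'v)
    \<Rightarrow> (('v + 'e) \<Rightarrow> real) set \<Rightarrow> 'e set" where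
  "double_edges E src tgt S =
     {f\<in>E. src f \<noteq> tgt f \<and> (eLeft src tgt f \<in> S \<or> eRight src tgt f \<in> S) \<and> eE f \<in> S}"

end

theory Submission imports Defs "HOL-Library.Function_Algebras"
begin

definition fsc :: "real \<Rightarrow> ('a \<Rightarrow> real) \<Rightarrow> ('a \<Rightarrow> real)" where
  "fsc r f = (\<lambda>j. r * f j)"

interpretation fv: vector_space fsc
  by unfold_locales (auto simp: fsc_def algebra_simps fun_eq_iff)

lemma fsum_apply: "(\<Sum>v\<in>T. fsc (u v) (g v)) = (\<lambda>j. \<Sum>v\<in>T. u v * g v j)"
  by (induction T rule: infinite_finite_induct) (auto simp: fsc_def fun_eq_iff)

lemma sum_delta_r: "finite A \<Longrightarrow> (\<Sum>i\<in>A. g i * (if x = i then (1::real) else 0)) = (if x \<in> A then g x else 0)"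
proof -
  assume "finite A"
  have "(\<lambda>i. g i * (if x = i then (1::real) else 0)) = (\<lambda>i. if x = i then g i else 0)" by auto
  then show ?thesis using \<open>finite A\<close> by (simp only: sum.delta')
qed

lemma span_full:
  assumes fI: "finite I" and fS: "finite S" and supp: "\<forall>p\<in>S. \<forall>j. j \<notin> I \<longrightarrow> p j = 0"
    and ind: "\<forall>c. (\<forall>j. (\<Sum>p\<in>S. c p * p j) = 0) \<longrightarrow> (\<forall>p\<in>S. c p = 0)"
    and cS: "card S = card I" and xs: "\<forall>j. j \<notin> I \<longrightarrow> x j = 0"
  shows "x \<in> fv.span S"
proof (rule ccontr)
  assume nx: "x \<notin> fv.span S"
  have indS: "fv.independent S"
    unfolding fv.dependent_explicit
  proof
    assume "\<exists>t u. finite t \<and> t \<subseteq> S \<and> (\<Sum>v\<in>t. fsc (u v) v) = 0 \<and> (\<exists>v\<in>t. u v \<noteq> 0)"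
    then obtain t u v where t: "finite t" "t \<subseteq> S" "(\<Sum>v\<in>t. fsc (u v) v) = 0" and v: "v\<in>t" "u v \<noteq> 0"
      by blast
    define c where "c p = (if p \<in> t then u p else 0)" for p
    have "\<forall>j. (\<Sum>p\<in>S. c p * p j) = 0"
    proof
      fix j
      have "(\<Sum>p\<in>S. c p * p j) = (\<Sum>p\<in>t. u p * p j)"
        using t fS by (intro sum.mono_neutral_cong_right) (auto simp: c_def)
      also have "\<dots> = (\<Sum>v\<in>t. fsc (u v) v) j" by (simp add: fsum_apply)
      also have "\<dots> = 0" using t by simp
      finally show "(\<Sum>p\<in>S. c p * p j) = 0" .
    qed
    then have "c v = 0" using ind v t by blast
    then show False using v by (simp add: c_def)
  qed
  have ind2: "fv.independent (insert x S)" using fv.independent_insertI[OF nx indS] .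
  have sup: "y \<in> fv.span (unitv ` I)" if "\<forall>j. j \<notin> I \<longrightarrow> y j = 0" for y :: "'a \<Rightarrow> real"
  proof -
    have "y = (\<Sum>i\<in>I. fsc (y i) (unitv i))"
      unfolding fsum_apply using that fI
      by (auto simp: fun_eq_iff unitv_def sum_delta_r)
    also have "\<dots> \<in> fv.span (unitv ` I)"
      by (intro fv.span_sum fv.span_scale fv.span_base) auto
    finally show ?thesis .
  qed
  have sub: "insert x S \<subseteq> fv.span (unitv ` I)"
    using sup xs supp by blast
  have "card (insert x S) \<le> card (unitv ` I)"
    using fv.independent_span_bound[OF _ ind2 sub] fI by blast
  also have "\<dots> \<le> card I" using fI by (rule card_image_le)
  also have "card (insert x S) = Suc (card S)"
    using nx fS fv.span_base[of x S] by (metis card_insert_disjoint)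
  finally show False using cS by simp
qed

definition lin :: "'a set \<Rightarrow> ('a \<Rightarrow> real) \<Rightarrow> ('a \<Rightarrow> real) \<Rightarrow> real" where
  "lin I k p = (\<Sum>i\<in>I. k i * p i)"

lemma lin_unitv: "finite I \<Longrightarrow> a \<in> I \<Longrightarrow> lin I k (unitv a) = k a"
proof -
  assume "finite I" "a \<in> I"
  have "(\<lambda>i. k i * unitv a i) = (\<lambda>i. if i = a then k i else 0)" by (auto simp: unitv_def)
  then show ?thesis using \<open>finite I\<close> \<open>a \<in> I\<close> unfolding lin_def by (simp only: sum.delta) simp
qed

lemma lin_comb: "lin I k (\<lambda>j. x * p j + y * q j + z * r j) = x * lin I k p + y * lin I k q + z * lin I k r"
  by (simp add: lin_def algebra_simps sum.distrib sum_distrib_left)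

lemma lin_eSq: "lin I k (eSq src tgt f) = lin I k (eN (src f)) + lin I k (eN (tgt f)) - lin I k (eE f)"
  using lin_comb[of I k 1 "eN (src f)" 1 "eN (tgt f)" "-1" "eE f"] by (simp add: eSq_def)
lemma lin_eLeft: "lin I k (eLeft src tgt f) = lin I k (eN (src f)) - lin I k (eN (tgt f)) + lin I k (eE f)"
  using lin_comb[of I k 1 "eN (src f)" "-1" "eN (tgt f)" "1" "eE f"] by (simp add: eLeft_def)
lemma lin_eRight: "lin I k (eRight src tgt f) = - lin I k (eN (src f)) + lin I k (eN (tgt f)) + lin I k (eE f)"
  using lin_comb[of I k "-1" "eN (src f)" "1" "eN (tgt f)" "1" "eE f"] by (simp add: eRight_def)

lemma lin_eN: "finite V \<Longrightarrow> finite E \<Longrightarrow> u \<in> V \<Longrightarrow> lin (V <+> E) k (eN u) = k (Inl u)"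
  unfolding eN_def by (rule lin_unitv) auto
lemma lin_eE: "finite V \<Longrightarrow> finite E \<Longrightarrow> f \<in> E \<Longrightarrow> lin (V <+> E) k (eE f) = k (Inr f)"
  unfolding eE_def by (rule lin_unitv) auto

lemma coord_sum:
  assumes "finite V" "finite E" "\<forall>f\<in>E. src f \<in> V \<and> tgt f \<in> V" "p \<in> cosmo_points V E src tgt"
  shows "lin (V <+> E) (\<lambda>_. 1) p = 1"
  using assms unfolding cosmo_points_def
  by (auto simp: lin_eN lin_eE lin_eSq lin_eLeft lin_eRight)

lemma supp_cosmo:
  assumes "\<forall>f\<in>E. src f \<in> V \<and> tgt f \<in> V" "p \<in> cosmo_points V E src tgt" "j \<notin> V <+> E"
  shows "p j = 0"
  using assms unfolding cosmo_points_def
  by (cases j) (auto simp: eN_def eE_def unitv_def eSq_def eLeft_def eRight_def split: if_splits)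

lemma group_lemma:
  fixes a :: "'k \<Rightarrow> real" and g :: "'k \<Rightarrow> 'a \<Rightarrow> real"
  assumes "finite K" "g ` K \<subseteq> S" "finite S"
  shows "(\<Sum>p\<in>S. (\<Sum>k\<in>{k\<in>K. g k = p}. a k) * p j) = (\<Sum>k\<in>K. a k * g k j)"
proof -
  have "(\<Sum>p\<in>S. (\<Sum>k\<in>{k\<in>K. g k = p}. a k) * p j) = (\<Sum>p\<in>S. (\<Sum>k\<in>{k\<in>K. g k = p}. a k * g k j))"
  proof (rule sum.cong)
    fix p assume "p \<in> S"
    have "(\<Sum>k\<in>{k\<in>K. g k = p}. a k) * p j = (\<Sum>k\<in>{k\<in>K. g k = p}. a k * p j)"
      by (rule sum_distrib_right)
    also have "\<dots> = (\<Sum>k\<in>{k\<in>K. g k = p}. a k * g k j)"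
      by (rule sum.cong) auto
    finally show "(\<Sum>k\<in>{k\<in>K. g k = p}. a k) * p j = (\<Sum>k\<in>{k\<in>K. g k = p}. a k * g k j)" .
  qed simp
  also have "\<dots> = (\<Sum>k\<in>K. a k * g k j)"
    using sum.group[OF assms(1) assms(3) assms(2), of "\<lambda>k. a k * g k j"] by simp
  finally show ?thesis .
qed

lemma indep3:
  fixes a1 :: "'k1 \<Rightarrow> real" and g1 :: "'k1 \<Rightarrow> 'a \<Rightarrow> real"
    and a2 :: "'k2 \<Rightarrow> real" and g2 :: "'k2 \<Rightarrow> 'a \<Rightarrow> real"
    and a3 :: "'k3 \<Rightarrow> real" and g3 :: "'k3 \<Rightarrow> 'a \<Rightarrow> real"
  assumes fS: "finite S" and ind: "\<forall>c. (\<forall>j. (\<Sum>p\<in>S. c p * p j) = 0) \<longrightarrow> (\<forall>p\<in>S. c p = 0)"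
    and f: "finite K1" "finite K2" "finite K3"
    and g: "g1 ` K1 \<subseteq> S" "g2 ` K2 \<subseteq> S" "g3 ` K3 \<subseteq> S"
    and z: "\<forall>j. (\<Sum>k\<in>K1. a1 k * g1 k j) + (\<Sum>k\<in>K2. a2 k * g2 k j) + (\<Sum>k\<in>K3. a3 k * g3 k j) = 0"
    and p: "p \<in> S"
  shows "(\<Sum>k\<in>{k\<in>K1. g1 k = p}. a1 k) + (\<Sum>k\<in>{k\<in>K2. g2 k = p}. a2 k) + (\<Sum>k\<in>{k\<in>K3. g3 k = p}. a3 k) = 0"
proof -
  define c where "c p = (\<Sum>k\<in>{k\<in>K1. g1 k = p}. a1 k) + (\<Sum>k\<in>{k\<in>K2. g2 k = p}. a2 k) + (\<Sum>k\<in>{k\<in>K3. g3 k = p}. a3 k)" for p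
  have "\<forall>j. (\<Sum>p\<in>S. c p * p j) = 0"
  proof
    fix j
    have "(\<Sum>p\<in>S. c p * p j) = (\<Sum>p\<in>S. (\<Sum>k\<in>{k\<in>K1. g1 k = p}. a1 k) * p j) + (\<Sum>p\<in>S. (\<Sum>k\<in>{k\<in>K2. g2 k = p}. a2 k) * p j)
        + (\<Sum>p\<in>S. (\<Sum>k\<in>{k\<in>K3. g3 k = p}. a3 k) * p j)"
      unfolding c_def distrib_right sum.distrib by simp
    also have "\<dots> = 0" using z group_lemma[OF f(1) g(1) fS] group_lemma[OF f(2) g(2) fS] group_lemma[OF f(3) g(3) fS] by simp
    finally show "(\<Sum>p\<in>S. c p * p j) = 0" .
  qed
  then have "c p = 0" using ind p by blast
  then show ?thesis unfolding c_def .
qed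

lemma cell_of_max:
  assumes "regular_triangulation V E src tgt h T" "max_simplex T S"
  shows "lower_cell V E src tgt h S"
proof -
  from assms obtain C where C: "lower_cell V E src tgt h C" "S \<subseteq> C"
    unfolding regular_triangulation_def max_simplex_def by blast
  then have "C \<in> T" using assms(1) unfolding regular_triangulation_def by blast
  then have "S = C" using C assms(2) unfolding max_simplex_def by blast
  then show ?thesis using C by simp
qed

lemma height_fn:
  assumes fin: "finite V" "finite E" and ends: "\<forall>f\<in>E. src f \<in> V \<and> tgt f \<in> V"
    and good: "good_triangulation V E src tgt T" and mS: "max_simplex T S"
  shows "\<exists>k. (\<forall>p\<in>std_simplex V E. lin (V <+> E) k p \<le> 0) \<and>
             (\<forall>p\<in>S \<inter> std_simplex V E. lin (V <+> E) k p = 0) \<and>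
             (\<forall>p\<in>S - std_simplex V E. lin (V <+> E) k p > 0)"
proof -
  let ?I = "V <+> E"
  let ?P = "cosmo_points V E src tgt"
  let ?D = "std_simplex V E"
  obtain h where reg: "regular_triangulation V E src tgt h T" and ms: "max_simplex T ?D"
    using good unfolding good_triangulation_def by blast
  have c0: "lower_cell V E src tgt h ?D" by (rule cell_of_max[OF reg ms])
  have c1: "lower_cell V E src tgt h S" by (rule cell_of_max[OF reg mS])
  obtain a0 b0 where ab0: "\<forall>p\<in>?D. (\<Sum>i\<in>?I. a0 i * p i) + b0 = h p"
      "\<forall>p\<in>?P - ?D. (\<Sum>i\<in>?I. a0 i * p i) + b0 < h p"
    using c0 unfolding lower_cell_def by blast
  obtain a b where ab: "\<forall>p\<in>S. (\<Sum>i\<in>?I. a i * p i) + b = h p"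
      "\<forall>p\<in>?P - S. (\<Sum>i\<in>?I. a i * p i) + b < h p"
    using c1 unfolding lower_cell_def by blast
  have SP: "S \<subseteq> ?P" using c1 unfolding lower_cell_def by blast
  have DP: "?D \<subseteq> ?P" unfolding std_simplex_def cosmo_points_def by blast
  define k where "k i = a i - a0 i + (b - b0)" for i
  have keq: "lin ?I k p = ((\<Sum>i\<in>?I. a i * p i) + b) - ((\<Sum>i\<in>?I. a0 i * p i) + b0)" if "p \<in> ?P" for p
  proof -
    have "lin ?I k p = (\<Sum>i\<in>?I. a i * p i) - (\<Sum>i\<in>?I. a0 i * p i) + (b - b0) * lin ?I (\<lambda>_. 1) p"
      by (simp add: lin_def k_def algebra_simps sum.distrib sum_subtractf sum_distrib_left)
    then show ?thesis using coord_sum[OF fin ends that] by simp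
  qed
  have le: "(\<Sum>i\<in>?I. a i * p i) + b \<le> h p" if "p \<in> ?P" for p
    using ab that by (cases "p \<in> S") (auto intro: less_imp_le)
  show ?thesis
  proof (intro exI conjI ballI)
    fix p assume p: "p \<in> ?D"
    show "lin ?I k p \<le> 0" using keq[of p] le[of p] ab0(1) p DP by auto
  next
    fix p assume p: "p \<in> S \<inter> ?D"
    show "lin ?I k p = 0" using keq[of p] ab(1) ab0(1) p DP by auto
  next
    fix p assume p: "p \<in> S - ?D"
    show "lin ?I k p > 0" using keq[of p] ab(1) ab0(2) p SP by force
  qed
qed


lemma sum_delta_l: "finite A \<Longrightarrow> a \<in> A \<Longrightarrow> (\<Sum>x\<in>A. (if x = a then c else 0) * g x) = (c::real) * g a"
proof -
  assume "finite A" "a \<in> A"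
  have "(\<lambda>x. (if x = a then c else 0) * g x) = (\<lambda>x. if x = a then c * g x else 0)" by auto
  then show ?thesis using \<open>finite A\<close> \<open>a \<in> A\<close> by (simp only: sum.delta) simp
qed

lemma eN_app: "eN u j = (if j = Inl u then 1 else 0)" by (simp add: eN_def unitv_def)
lemma eE_app: "eE f j = (if j = Inr f then 1 else 0)" by (simp add: eE_def unitv_def)

lemma ev_Inr:
  "eN u (Inr g) = 0" "eE f (Inr g) = (if g = f then 1 else 0)"
  "eSq src tgt f (Inr g) = (if g = f then -1 else 0)"
  "eLeft src tgt f (Inr g) = (if g = f then 1 else 0)"
  "eRight src tgt f (Inr g) = (if g = f then 1 else 0)"
  by (auto simp: eN_app eE_app eSq_def eLeft_def eRight_def)

lemma neg_not_std: "p j = -1 \<Longrightarrow> p \<noteq> eN u \<and> p \<noteq> eE f"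
  by (auto simp: eN_app eE_app split: if_splits)

lemma eSq_ne: "eSq src tgt f \<noteq> eN u \<and> eSq src tgt f \<noteq> eE g"
  by (rule neg_not_std[of _ "Inr f"]) (simp add: ev_Inr)
lemma eLeft_ne: "src f \<noteq> tgt f \<Longrightarrow> eLeft src tgt f \<noteq> eN u \<and> eLeft src tgt f \<noteq> eE g"
  by (rule neg_not_std[of _ "Inl (tgt f)"]) (simp add: eLeft_def eN_app eE_app)
lemma eRight_ne: "src f \<noteq> tgt f \<Longrightarrow> eRight src tgt f \<noteq> eN u \<and> eRight src tgt f \<noteq> eE g"
  by (rule neg_not_std[of _ "Inl (src f)"]) (simp add: eRight_def eN_app eE_app)
lemma eN_ne_eE: "eN u \<noteq> eE f"
  by (metis Inl_Inr_False eE_app eN_app zero_neq_one)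
lemma eE_ne_eN: "eE f \<noteq> eN u"
  using eN_ne_eE by metis
lemma eN_inj: "eN u = eN v \<longleftrightarrow> u = v"
  by (metis eN_app old.sum.inject(1) zero_neq_one)
lemma eE_inj: "eE f = eE g \<longleftrightarrow> f = g"
  by (metis eE_app old.sum.inject(2) zero_neq_one)
lemma loop_eq: "src f = tgt f \<Longrightarrow> eLeft src tgt f = eE f \<and> eRight src tgt f = eE f"
  by (auto simp: eLeft_def eRight_def fun_eq_iff)

theorem mainTheorem2:
  fixes V :: "'v set" and E :: "'e set" and src tgt :: "'e \<Rightarrow> 'v"
    and T :: "(('v + 'e) \<Rightarrow> real) set set" and S :: "(('v + 'e) \<Rightarrow> real) set" and w :: 'v
  assumes "finite V" and "finite E"
    and "\<forall>f\<in>E. src f \<in> V \<and> tgt f \<in> V"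
    and "good_triangulation V E src tgt T"
    and "max_simplex T S"
    and "w \<in> V"
  shows "(\<exists>lu lf. \<forall>j::'v + 'e. eN w j =
            (\<Sum>u\<in>sel_nodes V S. lu u * eN u j) +
            (\<Sum>f\<in>double_edges E src tgt S. lf f * (eN (src f) j - eN (tgt f) j)))
       \<and> (\<forall>lu lf lu' lf'.
            (\<forall>j::'v + 'e. eN w j =
               (\<Sum>u\<in>sel_nodes V S. lu u * eN u j) +
               (\<Sum>f\<in>double_edges E src tgt S. lf f * (eN (src f) j - eN (tgt f) j))) \<and>
            (\<forall>j::'v + 'e. eN w j =
               (\<Sum>u\<in>sel_nodes V S. lu' u * eN u j) +
               (\<Sum>f\<in>double_edges E src tgt S. lf' f * (eN (src f) j - eN (tgt f) j)))
            \<longrightarrow> (\<forall>u\<in>sel_nodes V S. lu u = lu' u) \<and>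
                (\<forall>f\<in>double_edges E src tgt S. lf f = lf' f))"
proof -
  note fin = assms(1,2) and ends = assms(3)
  let ?I = "V <+> E"
  let ?P = "cosmo_points V E src tgt"
  let ?D = "std_simplex V E"
  define VS where "VS = sel_nodes V S"
  define DS where "DS = double_edges E src tgt S"
  have fI: "finite ?I" using fin by simp
  have fVS: "finite VS" using fin by (simp add: VS_def sel_nodes_def)
  have fDS: "finite DS" using fin by (simp add: DS_def double_edges_def)
  have DSE: "DS \<subseteq> E" by (auto simp: DS_def double_edges_def)
  obtain h where reg: "regular_triangulation V E src tgt h T"
    using assms(4) unfolding good_triangulation_def by blast
  have c1: "lower_cell V E src tgt h S" by (rule cell_of_max[OF reg assms(5)])
  have SP: "S \<subseteq> ?P" and cardS: "card S = card ?I" and aff: "aff_indep S"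
    using c1 fin unfolding lower_cell_def by (auto simp: card_Plus)
  have fS: "finite S" using aff unfolding aff_indep_def by blast
  have ind: "\<forall>c. (\<forall>j. (\<Sum>p\<in>S. c p * p j) = 0) \<longrightarrow> (\<forall>p\<in>S. c p = 0)"
  proof (intro allI impI)
    fix c assume z: "\<forall>j. (\<Sum>p\<in>S. c p * p j) = 0"
    have "sum c S = (\<Sum>p\<in>S. c p * lin ?I (\<lambda>_. 1) p)"
      using coord_sum[OF fin ends] SP by (intro sum.cong) auto
    also have "\<dots> = (\<Sum>i\<in>?I. \<Sum>p\<in>S. c p * p i)"
      unfolding lin_def by (simp add: sum_distrib_left sum.swap[of _ S])
    also have "\<dots> = 0" using z by simp
    finally have "sum c S = 0" .
    then show "\<forall>p\<in>S. c p = 0" using aff z unfolding aff_indep_def by blast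
  qed
  obtain k where k1: "\<forall>p\<in>?D. lin ?I k p \<le> 0" and k2: "\<forall>p\<in>S \<inter> ?D. lin ?I k p = 0"
      and k3: "\<forall>p\<in>S - ?D. lin ?I k p > 0"
    using height_fn[OF fin ends assms(4,5)] by blast
  have stdN: "eN u \<in> ?D" if "u \<in> V" for u using that by (simp add: std_simplex_def)
  have stdE: "eE f \<in> ?D" if "f \<in> E" for f using that by (simp add: std_simplex_def)
  have sqD: "eSq src tgt f \<notin> ?D" for f using eSq_ne[of src tgt f] unfolding std_simplex_def by auto
  have lD: "eLeft src tgt f \<notin> ?D" if "src f \<noteq> tgt f" for f using eLeft_ne[where src=src and tgt=tgt and f=f, OF that] unfolding std_simplex_def by auto
  have rD: "eRight src tgt f \<notin> ?D" if "src f \<noteq> tgt f" for f using eRight_ne[where src=src and tgt=tgt and f=f, OF that] unfolding std_simplex_def by auto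
  have C1: "\<not> (eE f \<in> S \<and> eSq src tgt f \<in> S)" if f: "f \<in> E" for f
  proof
    assume a: "eE f \<in> S \<and> eSq src tgt f \<in> S"
    have "lin ?I k (eE f) = 0" using k2 a stdE[OF f] by blast
    moreover have "lin ?I k (eSq src tgt f) > 0" using k3 a sqD by blast
    moreover have "lin ?I k (eN (src f)) \<le> 0" "lin ?I k (eN (tgt f)) \<le> 0" using k1 stdN ends f by auto
    ultimately show False by (simp add: lin_eSq)
  qed
  have C2: "\<not> (eSq src tgt f \<in> S \<and> eLeft src tgt f \<in> S)" if f: "f \<in> E" "src f \<noteq> tgt f" for f
  proof
    assume a: "eSq src tgt f \<in> S \<and> eLeft src tgt f \<in> S"
    have "lin ?I k (eLeft src tgt f) > 0" using k3 a lD[OF f(2)] by blast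
    moreover have "lin ?I k (eSq src tgt f) > 0" using k3 a sqD by blast
    moreover have "lin ?I k (eN (src f)) \<le> 0" using k1 stdN ends f by auto
    ultimately show False by (simp add: lin_eSq lin_eLeft)
  qed
  have C3: "\<not> (eSq src tgt f \<in> S \<and> eRight src tgt f \<in> S)" if f: "f \<in> E" "src f \<noteq> tgt f" for f
  proof
    assume a: "eSq src tgt f \<in> S \<and> eRight src tgt f \<in> S"
    have "lin ?I k (eRight src tgt f) > 0" using k3 a rD[OF f(2)] by blast
    moreover have "lin ?I k (eSq src tgt f) > 0" using k3 a sqD by blast
    moreover have "lin ?I k (eN (tgt f)) \<le> 0" using k1 stdN ends f by auto
    ultimately show False by (simp add: lin_eSq lin_eRight)
  qed
  have C4: "\<not> (eLeft src tgt f \<in> S \<and> eRight src tgt f \<in> S)" if f: "f \<in> E" "src f \<noteq> tgt f" for f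
  proof
    assume a: "eLeft src tgt f \<in> S \<and> eRight src tgt f \<in> S"
    have "lin ?I k (eRight src tgt f) > 0" using k3 a rD[OF f(2)] by blast
    moreover have "lin ?I k (eLeft src tgt f) > 0" using k3 a lD[OF f(2)] by blast
    moreover have "lin ?I k (eE f) \<le> 0" using k1 stdE f by auto
    ultimately show False by (simp add: lin_eLeft lin_eRight)
  qed
  define q where "q f = (if eE f \<in> S then eE f else if eSq src tgt f \<in> S then eSq src tgt f
     else if eLeft src tgt f \<in> S then eLeft src tgt f else eRight src tgt f)" for f
  have qI1: "q f (Inr g) = 0" if "g \<noteq> f" for f g using that by (simp add: q_def ev_Inr)
  have qI2: "q f (Inr f) \<noteq> 0" for f by (simp add: q_def ev_Inr)
  define rep where "rep lu lf lq = (\<lambda>j. (\<Sum>u\<in>VS. lu u * eN u j) +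
       (\<Sum>f\<in>DS. lf f * (eN (src f) j - eN (tgt f) j)) + (\<Sum>f\<in>E. lq f * q f j))" for lu lf lq
  define R where "R = {x. \<exists>lu lf lq. x = rep lu lf lq}"
  have subR: "fv.subspace R"
    unfolding fv.subspace_def
  proof (intro conjI ballI allI)
    show "0 \<in> R" unfolding R_def
      by (rule CollectI, rule exI[of _ "\<lambda>_. 0"], rule exI[of _ "\<lambda>_. 0"], rule exI[of _ "\<lambda>_. 0"])
         (simp add: rep_def fun_eq_iff)
  next
    fix x y assume "x \<in> R" "y \<in> R"
    then obtain a1 a2 a3 b1 b2 b3 where "x = rep a1 a2 a3" "y = rep b1 b2 b3" unfolding R_def by blast
    then have "x + y = rep (\<lambda>u. a1 u + b1 u) (\<lambda>u. a2 u + b2 u) (\<lambda>u. a3 u + b3 u)"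
      by (simp add: rep_def fun_eq_iff sum.distrib[symmetric] algebra_simps)
    then show "x + y \<in> R" unfolding R_def by blast
  next
    fix c x assume "x \<in> R"
    then obtain a1 a2 a3 where "x = rep a1 a2 a3" unfolding R_def by blast
    then have "fsc c x = rep (\<lambda>u. c * a1 u) (\<lambda>u. c * a2 u) (\<lambda>u. c * a3 u)"
      by (simp add: rep_def fun_eq_iff fsc_def algebra_simps sum_distrib_left)
    then show "fsc c x \<in> R" unfolding R_def by blast
  qed
  have SR: "S \<subseteq> R"
  proof
    fix p assume pS: "p \<in> S"
    then have "p \<in> ?P" using SP by blast
    then consider (N) u where "u \<in> V" "p = eN u" | (Ed) f where "f \<in> E" "p = eE f"
      | (Sq) f where "f \<in> E" "p = eSq src tgt f" | (L) f where "f \<in> E" "p = eLeft src tgt f"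
      | (Ri) f where "f \<in> E" "p = eRight src tgt f"
      unfolding cosmo_points_def by blast
    then show "p \<in> R"
    proof cases
      case (N u)
      then have "u \<in> VS" using pS by (simp add: VS_def sel_nodes_def)
      then have "p = rep (\<lambda>v. if v = u then 1 else 0) (\<lambda>_. 0) (\<lambda>_. 0)"
        using N fVS by (simp add: rep_def fun_eq_iff sum_delta_l)
      then show ?thesis unfolding R_def by blast
    next
      case (Ed f)
      then have "q f = p" using pS by (simp add: q_def)
      then have "p = rep (\<lambda>_. 0) (\<lambda>_. 0) (\<lambda>v. if v = f then 1 else 0)"
        using Ed fin by (simp add: rep_def fun_eq_iff sum_delta_l)
      then show ?thesis unfolding R_def by blast
    next
      case (Sq f)
      then have "q f = p" using pS C1[OF Sq(1)] by (auto simp: q_def)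
      then have "p = rep (\<lambda>_. 0) (\<lambda>_. 0) (\<lambda>v. if v = f then 1 else 0)"
        using Sq fin by (simp add: rep_def fun_eq_iff sum_delta_l)
      then show ?thesis unfolding R_def by blast
    next
      case (L f)
      show ?thesis
      proof (cases "src f = tgt f")
        case True
        then have "q f = p" using pS L loop_eq[where src=src and tgt=tgt and f=f, OF True] by (auto simp: q_def)
        then have "p = rep (\<lambda>_. 0) (\<lambda>_. 0) (\<lambda>v. if v = f then 1 else 0)"
          using L fin by (simp add: rep_def fun_eq_iff sum_delta_l)
        then show ?thesis unfolding R_def by blast
      next
        case False
        show ?thesis
        proof (cases "eE f \<in> S")
          case True
          then have "f \<in> DS" using L False pS by (simp add: DS_def double_edges_def)
          moreover have "q f = eE f" using True by (simp add: q_def)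
          ultimately have "p = rep (\<lambda>_. 0) (\<lambda>v. if v = f then 1 else 0) (\<lambda>v. if v = f then 1 else 0)"
            using L fin fDS by (simp add: rep_def fun_eq_iff sum_delta_l eLeft_def)
          then show ?thesis unfolding R_def by blast
        next
          case F2: False
          then have "q f = p" using pS L C2[OF L(1) False] by (auto simp: q_def)
          then have "p = rep (\<lambda>_. 0) (\<lambda>_. 0) (\<lambda>v. if v = f then 1 else 0)"
            using L fin by (simp add: rep_def fun_eq_iff sum_delta_l)
          then show ?thesis unfolding R_def by blast
        qed
      qed
    next
      case (Ri f)
      show ?thesis
      proof (cases "src f = tgt f")
        case True
        then have "q f = p" using pS Ri loop_eq[where src=src and tgt=tgt and f=f, OF True] by (auto simp: q_def)
        then have "p = rep (\<lambda>_. 0) (\<lambda>_. 0) (\<lambda>v. if v = f then 1 else 0)"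
          using Ri fin by (simp add: rep_def fun_eq_iff sum_delta_l)
        then show ?thesis unfolding R_def by blast
      next
        case False
        show ?thesis
        proof (cases "eE f \<in> S")
          case True
          then have "f \<in> DS" using Ri False pS by (simp add: DS_def double_edges_def)
          moreover have "q f = eE f" using True by (simp add: q_def)
          ultimately have "p = rep (\<lambda>_. 0) (\<lambda>v. if v = f then -1 else 0) (\<lambda>v. if v = f then 1 else 0)"
            using Ri fin fDS by (simp add: rep_def fun_eq_iff sum_delta_l eRight_def)
          then show ?thesis unfolding R_def by blast
        next
          case F2: False
          then have "q f = p" using pS Ri C3[OF Ri(1) False] C4[OF Ri(1) False] by (auto simp: q_def)
          then have "p = rep (\<lambda>_. 0) (\<lambda>_. 0) (\<lambda>v. if v = f then 1 else 0)"
            using Ri fin by (simp add: rep_def fun_eq_iff sum_delta_l)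
          then show ?thesis unfolding R_def by blast
        qed
      qed
    qed
  qed
  have "eN w \<in> fv.span S"
  proof (rule span_full[OF fI fS _ ind])
    show "\<forall>p\<in>S. \<forall>j. j \<notin> ?I \<longrightarrow> p j = 0" using supp_cosmo[OF ends] SP by blast
    show "card S = card ?I" by (rule cardS)
    show "\<forall>j. j \<notin> ?I \<longrightarrow> eN w j = 0" using assms(6) by (auto simp: eN_app)
  qed
  then have "eN w \<in> R" using fv.span_minimal[OF SR subR] by blast
  then obtain lu lf lq where rp: "eN w = rep lu lf lq" unfolding R_def by blast
  have lq0: "lq g = 0" if g: "g \<in> E" for g
  proof -
    have "0 = rep lu lf lq (Inr g)" using fun_cong[OF rp, of "Inr g"] by (simp add: eN_app)
    also have "\<dots> = (\<Sum>f\<in>E. lq f * q f (Inr g))" by (simp add: rep_def eN_app)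
    also have "\<dots> = (\<Sum>f\<in>E. (if f = g then lq g * q g (Inr g) else 0))"
      using qI1 by (intro sum.cong) auto
    also have "\<dots> = lq g * q g (Inr g)" using g fin by simp
    finally show ?thesis using qI2[of g] by simp
  qed
  have ex0: "\<forall>j::'v + 'e. eN w j = (\<Sum>u\<in>VS. lu u * eN u j) + (\<Sum>f\<in>DS. lf f * (eN (src f) j - eN (tgt f) j))"
  proof
    fix j :: "'v + 'e"
    have "(\<Sum>f\<in>E. lq f * q f j) = 0" using lq0 by simp
    then show "eN w j = (\<Sum>u\<in>VS. lu u * eN u j) + (\<Sum>f\<in>DS. lf f * (eN (src f) j - eN (tgt f) j))"
      using fun_cong[OF rp, of j] by (simp add: rep_def)
  qed
  then have ex: "\<exists>lu lf. \<forall>j::'v + 'e. eN w j = (\<Sum>u\<in>VS. lu u * eN u j) + (\<Sum>f\<in>DS. lf f * (eN (src f) j - eN (tgt f) j))"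
    by blast
  have un: "(\<forall>u\<in>VS. lu u = lu' u) \<and> (\<forall>f\<in>DS. lf f = lf' f)"
    if h1: "\<forall>j::'v + 'e. eN w j = (\<Sum>u\<in>VS. lu u * eN u j) + (\<Sum>f\<in>DS. lf f * (eN (src f) j - eN (tgt f) j))"
    and h2: "\<forall>j::'v + 'e. eN w j = (\<Sum>u\<in>VS. lu' u * eN u j) + (\<Sum>f\<in>DS. lf' f * (eN (src f) j - eN (tgt f) j))"
    for lu lf lu' lf'
  proof -
    define \<mu> where "\<mu> u = lu u - lu' u" for u
    define \<nu> where "\<nu> f = lf f - lf' f" for f
    define Lf where "Lf f = (eLeft src tgt f \<in> S)" for f
    define g3 where "g3 f = (if Lf f then eLeft src tgt f else eRight src tgt f)" for f
    define a2 where "a2 f = (if Lf f then - \<nu> f else \<nu> f)" for f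
    define a3 where "a3 f = (if Lf f then \<nu> f else - \<nu> f)" for f
    have z0: "(\<Sum>u\<in>VS. \<mu> u * eN u j) + (\<Sum>f\<in>DS. \<nu> f * (eN (src f) j - eN (tgt f) j)) = 0" for j :: "'v + 'e"
      using h1[rule_format, of j] h2[rule_format, of j]
      by (simp add: \<mu>_def \<nu>_def sum_subtractf left_diff_distrib)
    have per: "a2 f * eE f j + a3 f * g3 f j = \<nu> f * (eN (src f) j - eN (tgt f) j)" for f j
      by (cases "Lf f") (simp_all add: a2_def a3_def g3_def eLeft_def eRight_def algebra_simps)
    have z: "\<forall>j. (\<Sum>k\<in>VS. \<mu> k * eN k j) + (\<Sum>k\<in>DS. a2 k * eE k j) + (\<Sum>k\<in>DS. a3 k * g3 k j) = 0"
    proof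
      fix j
      have "(\<Sum>k\<in>DS. a2 k * eE k j) + (\<Sum>k\<in>DS. a3 k * g3 k j) = (\<Sum>f\<in>DS. \<nu> f * (eN (src f) j - eN (tgt f) j))"
        unfolding sum.distrib[symmetric] per ..
      then show "(\<Sum>k\<in>VS. \<mu> k * eN k j) + (\<Sum>k\<in>DS. a2 k * eE k j) + (\<Sum>k\<in>DS. a3 k * g3 k j) = 0"
        using z0[of j] by (simp add: add.assoc)
    qed
    have i1: "eN ` VS \<subseteq> S" by (auto simp: VS_def sel_nodes_def)
    have i2: "eE ` DS \<subseteq> S" by (auto simp: DS_def double_edges_def)
    have i3: "g3 ` DS \<subseteq> S" by (auto simp: DS_def double_edges_def g3_def Lf_def)
    have nl: "src f \<noteq> tgt f" if "f \<in> DS" for f using that by (simp add: DS_def double_edges_def)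
    have g3N: "g3 f \<noteq> eN u" if "f \<in> DS" for f u
      using eLeft_ne[where src=src and tgt=tgt and f=f, OF nl[OF that]] eRight_ne[where src=src and tgt=tgt and f=f, OF nl[OF that]] by (simp add: g3_def)
    have g3E: "g3 f \<noteq> eE g" if "f \<in> DS" for f g
      using eLeft_ne[where src=src and tgt=tgt and f=f, OF nl[OF that]] eRight_ne[where src=src and tgt=tgt and f=f, OF nl[OF that]] by (simp add: g3_def)
    note I3 = indep3[OF fS ind fVS fDS fDS i1 i2 i3 z]
    have A: "lu u = lu' u" if u: "u \<in> VS" for u
    proof -
      have "eN u \<in> S" using u i1 by blast
      note I = I3[OF this]
      have s1: "{k\<in>VS. eN k = eN u} = {u}" using u by (auto simp: eN_inj)
      have s2: "{k\<in>DS. eE k = eN u} = {}" by (simp add: eE_ne_eN)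
      have s3: "{k\<in>DS. g3 k = eN u} = {}" using g3N by blast
      show ?thesis using I unfolding s1 s2 s3 by (simp add: \<mu>_def)
    qed
    have B: "lf f = lf' f" if f: "f \<in> DS" for f
    proof -
      have "eE f \<in> S" using f i2 by blast
      note I = I3[OF this]
      have s1: "{k\<in>VS. eN k = eE f} = {}" by (simp add: eN_ne_eE)
      have s2: "{k\<in>DS. eE k = eE f} = {f}" using f by (auto simp: eE_inj)
      have s3: "{k\<in>DS. g3 k = eE f} = {}" using g3E by blast
      show ?thesis using I unfolding s1 s2 s3 by (simp add: a2_def \<nu>_def split: if_splits)
    qed
    show ?thesis using A B by blast
  qed
  show ?thesis using ex un unfolding VS_def DS_def by blast
qed

end
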